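(* Let $r$ be a positive integer and suppose $\vartheta> 1/(1+r)$, $\vartheta<1$. Let $(Z_t)$ be the random walk of the context with $c=1$. Then $$\pi(u,1,r,\vartheta)=\varrho(\vartheta)^u\quad\text{for all } u\in\mathbb{N}_0,$$ where $\varrho(\vartheta)=\pi(1,1,r,\vartheta)$ is the unique solution in $[0,1)$ of $\varrho=(1-\vartheta)+\vartheta\varrho^{r+1}$. Moreover, for the single-agent trust model with prior parameters $\alpha,\beta\in\mathbb{N}$ and $c=1$, the quitting probability satisfies $p_{\rm quit}(\alpha,\beta,1,r,\vartheta)=\pi(u_{\rm crit},1,r,\vartheta)$ with $u_{\rm crit}=r\alpha-\beta+1$.
   Context: Random walk: for $\vartheta\in(0,1)$ and positive integers $c,r$, let $Z_0=0$ and $Z_t=Z_{t-1}+\Delta_t$ with $\Delta_t$ i.i.d., $\Delta_t=+c$ with probability $1-\vartheta$ and $\Delta_t=-r$ with probability $\vartheta$. Define $\pi(u,c,r,\vartheta):=\mathbb{P}(\exists t\ge 0: Z_t\ge u)$. Single-agent trust model: $(X_t)$ i.i.d. Bernoulli$(\vartheta)$; $\hat S_t=\sum_{s\le t}X_s\mathbf{1}_{\{A_s=1\}}$, $\hat F_t=\sum_{s\le t}(1-X_s)\mathbf{1}_{\{A_s=1\}}$, $\hat\vartheta_t=\frac{\alpha+\hat S_t}{\alpha+\beta+\hat S_t+\hat F_t}$; $A_t=1$ iff $r\hat\vartheta_n-c(1-\hat\vartheta_n)\ge0$ for all $n\le t-1$; $\tau:=\inf\{t\in\mathbb{N}\cup\{\infty\}: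 r\hat\vartheta_t-c(1-\hat\vartheta_t)<0\}$; $p_{\rm quit}(\alpha,\beta,c,r,\vartheta):=\mathbb{P}(\tau<\infty)$. (The agent places trust while $c\hat F_t-r\hat S_t\le r\alpha-c\beta$.) *)

theory Defs
  imports "HOL-Probability.Probability"
begin

text \<open>Underlying i.i.d. Bernoulli(theta) sequence: a stream of booleans under the
  product measure; component t (0-based) is the (t+1)-st variable, True meaning 1.\<close>
definition bern_space :: "real \<Rightarrow> bool stream measure" where
  "bern_space \<theta> = stream_space (measure_pmf (bernoulli_pmf \<theta>))"

definition rw_step :: "nat \<Rightarrow> nat \<Rightarrow> bool \<Rightarrow> int" where
  "rw_step c r b = (if b then - int r else int c)"

definition rw_Z :: "nat \<Rightarrow> nat \<Rightarrow> bool stream \<Rightarrow> nat \<Rightarrow> int" where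
  "rw_Z c r \<omega> t = (\<Sum>s<t. rw_step c r (\<omega> !! s))"

definition rw_hit_prob :: "int \<Rightarrow> nat \<Rightarrow> nat \<Rightarrow> real \<Rightarrow> real" where
  "rw_hit_prob u c r \<theta> =
     measure (bern_space \<theta>) {\<omega> \<in> space (bern_space \<theta>). \<exists>t. rw_Z c r \<omega> t \<ge> u}"

definition theta_hat :: "real \<Rightarrow> real \<Rightarrow> nat \<Rightarrow> nat \<Rightarrow> real" where
  "theta_hat \<alpha> \<beta> S F = (\<alpha> + real S) / (\<alpha> + \<beta> + real S + real F)"

definition trust_ok :: "real \<Rightarrow> real \<Rightarrow> nat \<Rightarrow> nat \<Rightarrow> nat \<Rightarrow> nat \<Rightarrow> bool" where
  "trust_ok \<alpha> \<beta> c r S F \<longleftrightarrow>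
     real r * theta_hat \<alpha> \<beta> S F - real c * (1 - theta_hat \<alpha> \<beta> S F) \<ge> 0"

text \<open>State at time t: (S_t, F_t, alive_t) with alive_t = (trust condition holds at all n <= t).
  Trust is placed at time t+1 (A_{t+1} = 1) iff alive_t; X_{t+1} = omega !! t.\<close>
fun trust_state :: "real \<Rightarrow> real \<Rightarrow> nat \<Rightarrow> nat \<Rightarrow> bool stream \<Rightarrow> nat \<Rightarrow> nat \<times> nat \<times> bool" where
  "trust_state \<alpha> \<beta> c r \<omega> 0 = (0, 0, trust_ok \<alpha> \<beta> c r 0 0)"
| "trust_state \<alpha> \<beta> c r \<omega> (Suc t) =
     (case trust_state \<alpha> \<beta> c r \<omega> t of (S, F, al) \<Rightarrow>
        let S' = (if al \<and> \<omega> !! t then Suc S else S);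
            F' = (if al \<and> \<not> \<omega> !! t then Suc F else F)
        in (S', F', al \<and> trust_ok \<alpha> \<beta> c r S' F'))"

definition S_hat :: "real \<Rightarrow> real \<Rightarrow> nat \<Rightarrow> nat \<Rightarrow> bool stream \<Rightarrow> nat \<Rightarrow> nat" where
  "S_hat \<alpha> \<beta> c r \<omega> t = fst (trust_state \<alpha> \<beta> c r \<omega> t)"

definition F_hat :: "real \<Rightarrow> real \<Rightarrow> nat \<Rightarrow> nat \<Rightarrow> bool stream \<Rightarrow> nat \<Rightarrow> nat" where
  "F_hat \<alpha> \<beta> c r \<omega> t = fst (snd (trust_state \<alpha> \<beta> c r \<omega> t))"

definition tau :: "real \<Rightarrow> real \<Rightarrow> nat \<Rightarrow> nat \<Rightarrow> bool stream \<Rightarrow> enat" where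
  "tau \<alpha> \<beta> c r \<omega> =
     (if \<exists>t. \<not> trust_ok \<alpha> \<beta> c r (S_hat \<alpha> \<beta> c r \<omega> t) (F_hat \<alpha> \<beta> c r \<omega> t)
      then enat (LEAST t. \<not> trust_ok \<alpha> \<beta> c r (S_hat \<alpha> \<beta> c r \<omega> t) (F_hat \<alpha> \<beta> c r \<omega> t))
      else \<infinity>)"

definition p_quit :: "real \<Rightarrow> real \<Rightarrow> nat \<Rightarrow> nat \<Rightarrow> real \<Rightarrow> real" where
  "p_quit \<alpha> \<beta> c r \<theta> =
     measure (bern_space \<theta>) {\<omega> \<in> space (bern_space \<theta>). tau \<alpha> \<beta> c r \<omega> < \<infinity>}"

end

theory Submission
  imports Defs
begin

lemma bs_prob: "prob_space (bern_space \<theta>)"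
  unfolding bern_space_def by (intro prob_space.prob_space_stream_space prob_space_measure_pmf)

lemma space_bs[simp]: "space (bern_space \<theta>) = UNIV"
  unfolding bern_space_def by (simp add: space_stream_space)

lemma rw_Z_stake: "rw_Z c r \<omega> t = sum_list (map (rw_step c r) (stake t \<omega>))"
  unfolding rw_Z_def by (induction t arbitrary: \<omega>) (simp_all only: sum.lessThan_Suc_shift, auto)

lemma sets_bs: "sets (bern_space \<theta>) = sets (stream_space (count_space UNIV))"
  unfolding bern_space_def by (rule sets_stream_space_cong) simp

lemma rw_Z_meas[measurable]: "(\<lambda>\<omega>. rw_Z c r \<omega> t) \<in> measurable (bern_space \<theta>) (count_space UNIV)"
proof -
  have "(\<lambda>\<omega>. sum_list (map (rw_step c r) (stake t \<omega>))) \<in> measurable (stream_space (count_space UNIV)) (count_space UNIV)"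
    by (rule measurable_compose[OF measurable_stake]) simp
  then show ?thesis unfolding rw_Z_stake using measurable_cong_sets[OF sets_bs refl] by blast
qed

lemma decomp:
  assumes "0 \<le> \<theta>" "\<theta> \<le> 1" and A[measurable]: "A \<in> sets (bern_space \<theta>)"
  shows "measure (bern_space \<theta>) A = \<theta> * measure (bern_space \<theta>) {\<omega>. True ## \<omega> \<in> A}
     + (1 - \<theta>) * measure (bern_space \<theta>) {\<omega>. False ## \<omega> \<in> A}"
proof -
  interpret P: prob_space "bern_space \<theta>" by (rule bs_prob)
  have "emeasure (bern_space \<theta>) A = (\<integral>\<^sup>+t. emeasure (bern_space \<theta>) {x\<in>space (bern_space \<theta>). t ## x \<in> A} \<partial>measure_pmf (bernoulli_pmf \<theta>))"
    using A unfolding bern_space_def by (rule prob_space.emeasure_stream_space[OF prob_space_measure_pmf])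
  also have "\<dots> = ennreal \<theta> * emeasure (bern_space \<theta>) {\<omega>. True ## \<omega> \<in> A} + ennreal (1-\<theta>) * emeasure (bern_space \<theta>) {\<omega>. False ## \<omega> \<in> A}"
    using assms(1,2) by (simp add: nn_integral_measure_pmf nn_integral_count_space_finite UNIV_bool)
  finally show ?thesis using assms(1,2)
    by (simp add: P.emeasure_eq_measure ennreal_mult'[symmetric] ennreal_plus[symmetric] del: ennreal_plus)
qed

lemma sdrop_meas[measurable]: "sdrop t \<in> measurable (bern_space \<theta>) (bern_space \<theta>)"
  unfolding bern_space_def by measurable

lemma Zpred[measurable]: "Measurable.pred (bern_space \<theta>) (\<lambda>\<omega>. P (rw_Z c r \<omega> t))"
  by (rule measurable_compose[OF rw_Z_meas]) simp

lemma Z0[simp]: "rw_Z c r \<omega> 0 = 0" by (simp add: rw_Z_def)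

lemma Z_Suc_Cons: "rw_Z c r (x ## \<omega>) (Suc t) = rw_step c r x + rw_Z c r \<omega> t"
  unfolding rw_Z_def by (simp only: sum.lessThan_Suc_shift) simp

lemma Z_Suc: "rw_Z c r \<omega> (Suc t) = rw_Z c r \<omega> t + rw_step c r (\<omega> !! t)"
  unfolding rw_Z_def by simp

lemma Z_add: "rw_Z c r \<omega> (t + s) = rw_Z c r \<omega> t + rw_Z c r (sdrop t \<omega>) s"
  by (induction s) (simp_all add: Z_Suc sdrop_snth)

definition fh :: "nat \<Rightarrow> nat \<Rightarrow> int \<Rightarrow> nat \<Rightarrow> bool stream \<Rightarrow> bool" where
  "fh c r v t \<omega> \<longleftrightarrow> v \<le> rw_Z c r \<omega> t \<and> (\<forall>s<t. rw_Z c r \<omega> s < v)"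

lemma fh_0: "fh c r v 0 \<omega> \<longleftrightarrow> v \<le> 0" by (simp add: fh_def)

lemma fh_Cons: "fh c r v (Suc t) (x ## \<omega>) \<longleftrightarrow> 0 < v \<and> fh c r (v - rw_step c r x) t \<omega>"
proof -
  have "(\<forall>s<Suc t. rw_Z c r (x ## \<omega>) s < v) \<longleftrightarrow> 0 < v \<and> (\<forall>s<t. rw_Z c r (x ## \<omega>) (Suc s) < v)"
    by (auto simp: less_Suc_eq_0_disj)
  then show ?thesis unfolding fh_def Z_Suc_Cons by (auto simp: algebra_simps)
qed

lemma fh_unique: "fh c r v t \<omega> \<Longrightarrow> fh c r v s \<omega> \<Longrightarrow> t = s"
  unfolding fh_def by (metis linorder_neqE_nat not_le)

lemma ex_fh: "(\<exists>t. v \<le> rw_Z c r \<omega> t) \<longleftrightarrow> (\<exists>t. fh c r v t \<omega>)"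
  unfolding fh_def using exists_least_iff[of "\<lambda>t. v \<le> rw_Z c r \<omega> t"] by (auto simp: not_le)

definition aa :: "real \<Rightarrow> nat \<Rightarrow> nat \<Rightarrow> int \<Rightarrow> bool stream set \<Rightarrow> nat \<Rightarrow> real" where
  "aa \<theta> c r v B t = measure (bern_space \<theta>) {\<omega>. fh c r v t \<omega> \<and> sdrop t \<omega> \<in> B}"

lemma fh_meas[measurable]: "Measurable.pred (bern_space \<theta>) (fh c r v t)"
  unfolding fh_def by measurable

lemma aa_0: assumes "B \<in> sets (bern_space \<theta>)"
  shows "aa \<theta> c r v B 0 = (if v \<le> 0 then measure (bern_space \<theta>) B else 0)"
  unfolding aa_def fh_0 by simp

lemma aa_Suc: assumes "0 \<le> \<theta>" "\<theta> \<le> 1" and [measurable]: "B \<in> sets (bern_space \<theta>)"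
  shows "aa \<theta> c r v B (Suc t) = (if v \<le> 0 then 0 else
     \<theta> * aa \<theta> c r (v + int r) B t + (1 - \<theta>) * aa \<theta> c r (v - int c) B t)"
proof -
  have "{\<omega>\<in>space (bern_space \<theta>). fh c r v (Suc t) \<omega> \<and> sdrop (Suc t) \<omega> \<in> B} \<in> sets (bern_space \<theta>)"
    by measurable
  then have m: "{\<omega>. fh c r v (Suc t) \<omega> \<and> sdrop (Suc t) \<omega> \<in> B} \<in> sets (bern_space \<theta>)" by simp
  show ?thesis
    unfolding aa_def decomp[OF assms(1,2) m]
    by (simp add: fh_Cons rw_step_def)
qed

lemma UNIV_bs[measurable]: "UNIV \<in> sets (bern_space \<theta>)"
  using sets.top[of "bern_space \<theta>"] by simp

lemma aa_factor: assumes "0 \<le> \<theta>" "\<theta> \<le> 1" and B: "B \<in> sets (bern_space \<theta>)"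
  shows "aa \<theta> c r v B t = aa \<theta> c r v UNIV t * measure (bern_space \<theta>) B"
proof (induction t arbitrary: v)
  case 0
  interpret P: prob_space "bern_space \<theta>" by (rule bs_prob)
  have "measure (bern_space \<theta>) UNIV = 1" using P.prob_space by simp
  then show ?case using aa_0[OF B] aa_0[OF UNIV_bs] by simp
next
  case (Suc t)
  show ?case using aa_Suc[OF assms] aa_Suc[OF assms(1,2), of UNIV] Suc
    by (simp add: algebra_simps)
qed

lemma aa_nonneg: "0 \<le> aa \<theta> c r v B t" by (simp add: aa_def)

lemma aa_sums: assumes [measurable]: "B \<in> sets (bern_space \<theta>)"
  shows "aa \<theta> c r v B sums measure (bern_space \<theta>) {\<omega>. \<exists>t. fh c r v t \<omega> \<and> sdrop t \<omega> \<in> B}"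
proof -
  interpret P: prob_space "bern_space \<theta>" by (rule bs_prob)
  define A where "A t = {\<omega>. fh c r v t \<omega> \<and> sdrop t \<omega> \<in> B}" for t
  have "A t \<in> sets (bern_space \<theta>)" for t
  proof -
    have "{\<omega>\<in>space (bern_space \<theta>). fh c r v t \<omega> \<and> sdrop t \<omega> \<in> B} \<in> sets (bern_space \<theta>)"
      by measurable
    then show ?thesis by (simp add: A_def)
  qed
  moreover have "disjoint_family A"
    unfolding disjoint_family_on_def A_def using fh_unique by blast
  ultimately have "(\<lambda>t. measure (bern_space \<theta>) (A t)) sums measure (bern_space \<theta>) (\<Union>t. A t)"
    by (intro P.finite_measure_UNION) auto
  moreover have "(\<Union>t. A t) = {\<omega>. \<exists>t. fh c r v t \<omega> \<and> sdrop t \<omega> \<in> B}" by (auto simp: A_def)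
  moreover have "aa \<theta> c r v B = (\<lambda>t. measure (bern_space \<theta>) (A t))" by (simp add: aa_def A_def fun_eq_iff)
  ultimately show ?thesis by simp
qed

lemma hit_sums: "aa \<theta> c r v UNIV sums rw_hit_prob v c r \<theta>"
  using aa_sums[OF UNIV_bs, of \<theta> c r v] unfolding rw_hit_prob_def by (simp add: ex_fh)

lemma E_meas[measurable]: "{\<omega>. \<exists>t. v \<le> rw_Z c r \<omega> t} \<in> sets (bern_space \<theta>)"
proof -
  have "{\<omega>\<in>space (bern_space \<theta>). \<exists>t. v \<le> rw_Z c r \<omega> t} \<in> sets (bern_space \<theta>)" by measurable
  then show ?thesis by simp
qed

lemma Z1_le: "rw_Z 1 r \<omega> (Suc t) \<le> rw_Z 1 r \<omega> t + 1"
  by (simp add: Z_Suc rw_step_def)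

lemma fh1_eq: assumes "fh 1 r 1 t \<omega>" shows "rw_Z 1 r \<omega> t = 1"
proof (cases t)
  case 0 then show ?thesis using assms by (simp add: fh_def)
next
  case (Suc t')
  then show ?thesis using assms Z1_le[of r \<omega> t'] by (auto simp: fh_def)
qed

lemma hit_le0: assumes "v \<le> 0" shows "rw_hit_prob v c r \<theta> = 1"
proof -
  interpret P: prob_space "bern_space \<theta>" by (rule bs_prob)
  have "{\<omega> \<in> space (bern_space \<theta>). \<exists>t. v \<le> rw_Z c r \<omega> t} = space (bern_space \<theta>)"
    using assms by (auto intro: exI[of _ 0])
  then show ?thesis unfolding rw_hit_prob_def using P.prob_space by simp
qed

lemma hit_mult: assumes "0 \<le> \<theta>" "\<theta> \<le> 1" "0 \<le> v"
  shows "rw_hit_prob (v + 1) 1 r \<theta> = rw_hit_prob 1 1 r \<theta> * rw_hit_prob v 1 r \<theta>"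
proof -
  define E where "E = {\<omega>. \<exists>t. v \<le> rw_Z 1 r \<omega> t}"
  have Em: "E \<in> sets (bern_space \<theta>)" unfolding E_def by (rule E_meas)
  have eq: "{\<omega> \<in> space (bern_space \<theta>). \<exists>t. v + 1 \<le> rw_Z 1 r \<omega> t} = {\<omega>. \<exists>t. fh 1 r 1 t \<omega> \<and> sdrop t \<omega> \<in> E}"
  proof (intro set_eqI iffI)
    fix \<omega> assume "\<omega> \<in> {\<omega> \<in> space (bern_space \<theta>). \<exists>t. v + 1 \<le> rw_Z 1 r \<omega> t}"
    then obtain m where m: "v + 1 \<le> rw_Z 1 r \<omega> m" by auto
    then have "\<exists>t. 1 \<le> rw_Z 1 r \<omega> t" using assms(3) by (intro exI[of _ m]) simp
    then obtain t where t: "fh 1 r 1 t \<omega>" by (auto simp: ex_fh)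
    have "t \<le> m"
    proof (rule ccontr)
      assume "\<not> t \<le> m" then have "rw_Z 1 r \<omega> m < 1" using t by (auto simp: fh_def)
      then show False using m assms(3) by simp
    qed
    then obtain s where s: "m = t + s" using le_Suc_ex by blast
    have "v \<le> rw_Z 1 r (sdrop t \<omega>) s" using m fh1_eq[OF t] unfolding s Z_add by simp
    then show "\<omega> \<in> {\<omega>. \<exists>t. fh 1 r 1 t \<omega> \<and> sdrop t \<omega> \<in> E}" using t by (auto simp: E_def)
  next
    fix \<omega> assume "\<omega> \<in> {\<omega>. \<exists>t. fh 1 r 1 t \<omega> \<and> sdrop t \<omega> \<in> E}"
    then obtain t s where t: "fh 1 r 1 t \<omega>" and s: "v \<le> rw_Z 1 r (sdrop t \<omega>) s" by (auto simp: E_def)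
    then have "v + 1 \<le> rw_Z 1 r \<omega> (t + s)" using fh1_eq[OF t] unfolding Z_add by simp
    then show "\<omega> \<in> {\<omega> \<in> space (bern_space \<theta>). \<exists>t. v + 1 \<le> rw_Z 1 r \<omega> t}" by auto
  qed
  have "aa \<theta> 1 r 1 E sums rw_hit_prob (v + 1) 1 r \<theta>"
    using aa_sums[OF Em, of 1 r 1] unfolding rw_hit_prob_def eq .
  moreover have "aa \<theta> 1 r 1 E = (\<lambda>t. aa \<theta> 1 r 1 UNIV t * measure (bern_space \<theta>) E)"
    using aa_factor[OF assms(1,2) Em] by blast
  moreover have "(\<lambda>t. aa \<theta> 1 r 1 UNIV t * measure (bern_space \<theta>) E) sums (rw_hit_prob 1 1 r \<theta> * measure (bern_space \<theta>) E)"
    using hit_sums by (rule sums_mult2)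
  moreover have "measure (bern_space \<theta>) E = rw_hit_prob v 1 r \<theta>" by (simp add: rw_hit_prob_def E_def)
  ultimately show ?thesis using sums_unique2 by metis
qed

lemma E_Cons: "(\<exists>t. v \<le> rw_Z c r (x ## \<omega>) t) \<longleftrightarrow> v \<le> 0 \<or> (\<exists>t. v - rw_step c r x \<le> rw_Z c r \<omega> t)"
proof
  assume "\<exists>t. v \<le> rw_Z c r (x ## \<omega>) t"
  then obtain t where t: "v \<le> rw_Z c r (x ## \<omega>) t" by blast
  show "v \<le> 0 \<or> (\<exists>t. v - rw_step c r x \<le> rw_Z c r \<omega> t)"
  proof (cases t)
    case 0 then show ?thesis using t by simp
  next
    case (Suc t') then show ?thesis using t by (auto simp: Z_Suc_Cons algebra_simps)
  qed
next
  assume "v \<le> 0 \<or> (\<exists>t. v - rw_step c r x \<le> rw_Z c r \<omega> t)"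
  then show "\<exists>t. v \<le> rw_Z c r (x ## \<omega>) t"
  proof
    assume "v \<le> 0" then show ?thesis by (intro exI[of _ 0]) simp
  next
    assume "\<exists>t. v - rw_step c r x \<le> rw_Z c r \<omega> t"
    then obtain t where "v - rw_step c r x \<le> rw_Z c r \<omega> t" by blast
    then show ?thesis by (intro exI[of _ "Suc t"]) (simp add: Z_Suc_Cons algebra_simps)
  qed
qed

lemma rho_eq: assumes "0 \<le> \<theta>" "\<theta> \<le> 1"
  shows "rw_hit_prob 1 1 r \<theta> = (1 - \<theta>) + \<theta> * rw_hit_prob (1 + int r) 1 r \<theta>"
proof -
  interpret P: prob_space "bern_space \<theta>" by (rule bs_prob)
  have "measure (bern_space \<theta>) UNIV = 1" using P.prob_space by simp
  moreover have "{\<omega>. \<exists>t. (0::int) \<le> rw_Z c r \<omega> t} = UNIV" for c by (auto intro: exI[of _ 0])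
  ultimately show ?thesis
    unfolding rw_hit_prob_def space_bs using decomp[OF assms E_meas, of 1 1 r]
    by (simp add: E_Cons rw_step_def)
qed

lemma partial_bound:
  assumes "0 \<le> \<theta>" "\<theta> \<le> 1" "0 \<le> q" "q = (1 - \<theta>) + \<theta> * q ^ (r + 1)"
  shows "(\<Sum>t<n. aa \<theta> 1 r v UNIV t) \<le> (if v \<le> 0 then 1 else q ^ nat v)"
proof (induction n arbitrary: v)
  case 0 then show ?case using assms(3) by simp
next
  case (Suc n)
  interpret P: prob_space "bern_space \<theta>" by (rule bs_prob)
  have one: "measure (bern_space \<theta>) UNIV = 1" using P.prob_space by simp
  have split: "(\<Sum>t<Suc n. aa \<theta> 1 r v UNIV t) = aa \<theta> 1 r v UNIV 0 + (\<Sum>t<n. aa \<theta> 1 r v UNIV (Suc t))"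
    by (rule sum.lessThan_Suc_shift)
  show ?case
  proof (cases "v \<le> 0")
    case True
    then show ?thesis unfolding split using aa_0[OF UNIV_bs] aa_Suc[OF assms(1,2) UNIV_bs] one by simp
  next
    case False
    have "(\<Sum>t<Suc n. aa \<theta> 1 r v UNIV t) = \<theta> * (\<Sum>t<n. aa \<theta> 1 r (v + int r) UNIV t) + (1 - \<theta>) * (\<Sum>t<n. aa \<theta> 1 r (v - 1) UNIV t)"
      unfolding split using aa_0[OF UNIV_bs] aa_Suc[OF assms(1,2) UNIV_bs] False
      by (simp add: sum.distrib sum_distrib_left)
    also have "\<dots> \<le> \<theta> * q ^ nat (v + int r) + (1 - \<theta>) * q ^ nat (v - 1)"
    proof -
      have "(\<Sum>t<n. aa \<theta> 1 r (v + int r) UNIV t) \<le> q ^ nat (v + int r)" using Suc[of "v + int r"] False by simp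
      moreover have "(\<Sum>t<n. aa \<theta> 1 r (v - 1) UNIV t) \<le> q ^ nat (v - 1)"
        using Suc[of "v - 1"] False by (cases "v = 1") auto
      ultimately show ?thesis using assms(1,2) by (intro add_mono mult_left_mono) auto
    qed
    also have "\<dots> = q ^ nat (v - 1) * ((1 - \<theta>) + \<theta> * q ^ (r + 1))"
    proof -
      have "nat (v + int r) = nat (v - 1) + (r + 1)" using False by simp
      then show ?thesis by (simp add: power_add algebra_simps)
    qed
    also have "\<dots> = q ^ nat v"
    proof -
      have "nat v = Suc (nat (v - 1))" using False by simp
      then show ?thesis using assms(4) by simp
    qed
    finally show ?thesis using False by simp
  qed
qed

lemma hit_bound:
  assumes "0 \<le> \<theta>" "\<theta> \<le> 1" "0 \<le> q" "q = (1 - \<theta>) + \<theta> * q ^ (r + 1)"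
  shows "rw_hit_prob v 1 r \<theta> \<le> (if v \<le> 0 then 1 else q ^ nat v)"
proof -
  have "rw_hit_prob v 1 r \<theta> = suminf (aa \<theta> 1 r v UNIV)" using hit_sums by (metis sums_unique)
  also have "\<dots> \<le> (if v \<le> 0 then 1 else q ^ nat v)"
    using hit_sums partial_bound[OF assms] by (intro suminf_le_const) (auto simp: sums_iff)
  finally show ?thesis .
qed

definition SS :: "nat \<Rightarrow> real \<Rightarrow> real" where "SS r x = (\<Sum>i<Suc r. x ^ i)"

lemma SS_mono: assumes "0 < r" "0 \<le> x" "x < y" shows "SS r x < SS r y"
  unfolding SS_def
proof (rule sum_strict_mono_ex1)
  show "\<forall>i\<in>{..<Suc r}. x ^ i \<le> y ^ i" using assms by (auto intro: power_mono)
  show "\<exists>i\<in>{..<Suc r}. x ^ i < y ^ i" using assms by (intro bexI[of _ 1]) auto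
qed simp

lemma root_alt: fixes x :: real shows "(1 - \<theta>) + \<theta> * x ^ (r + 1) = x + (1 - x) * (1 - \<theta> * SS r x)"
proof -
  have "1 - x ^ (Suc r) = (1 - x) * SS r x" unfolding SS_def by (rule one_diff_power_eq)
  then have h: "x ^ (r + 1) = 1 - (1 - x) * SS r x" by simp
  show ?thesis by (subst h) (simp add: algebra_simps)
qed

lemma root_iff: fixes x :: real assumes "x < 1"
  shows "x = (1 - \<theta>) + \<theta> * x ^ (r + 1) \<longleftrightarrow> \<theta> * SS r x = 1"
  using assms unfolding root_alt by auto

lemma SS_0: "SS r 0 = 1" unfolding SS_def by (simp only: sum.lessThan_Suc_shift) simp
lemma SS_1: "SS r 1 = real r + 1" unfolding SS_def by simp

lemma root_exists:
  assumes "0 < r" "1 / (1 + real r) < \<theta>" "\<theta> < 1"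
  shows "\<exists>x. 0 \<le> x \<and> x < 1 \<and> x = (1 - \<theta>) + \<theta> * x ^ (r + 1)"
proof -
  have th: "0 < \<theta>" using assms(2) by (smt (verit) divide_pos_pos of_nat_0_le_iff)
  have big: "1 < \<theta> * (real r + 1)" using assms(2) by (simp add: field_simps)
  have "\<exists>x. 0 \<le> x \<and> x \<le> 1 \<and> \<theta> * SS r x = 1"
  proof (rule IVT')
    show "\<theta> * SS r 0 \<le> 1" using assms by (simp add: SS_0)
    show "1 \<le> \<theta> * SS r 1" using big by (simp add: SS_1)
    show "continuous_on {0..1} (\<lambda>x. \<theta> * SS r x)" unfolding SS_def by (intro continuous_intros)
  qed simp
  then obtain x where x: "0 \<le> x" "x \<le> 1" "\<theta> * SS r x = 1" by blast
  have "x \<noteq> 1" using x(3) big by (auto simp: SS_1)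
  then have "x < 1" using x by simp
  then show ?thesis using x root_iff by blast
qed

lemma root_unique:
  fixes x y \<theta> :: real
  assumes "0 < r" "0 \<le> x" "x < 1" "x = (1 - \<theta>) + \<theta> * x ^ (r + 1)"
    "0 \<le> y" "y < 1" "y = (1 - \<theta>) + \<theta> * y ^ (r + 1)" "0 < \<theta>"
  shows "x = y"
proof -
  have "\<theta> * SS r x = 1" "\<theta> * SS r y = 1" using assms root_iff by blast+
  then show ?thesis using SS_mono[OF assms(1)] assms(2,5,8)
    by (metis linorder_neqE_linordered_idom mult_less_cancel_left_pos order_less_irrefl)
qed

lemma frac_aux: fixes N D R :: real assumes "D \<noteq> 0"
  shows "R * (N / D) - 1 * (1 - N / D) = ((R + 1) * N - D) / D"
  using assms by (simp add: field_simps)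

lemma ok_iff:
  assumes "0 < \<alpha>" "0 \<le> \<beta>"
  shows "trust_ok \<alpha> \<beta> 1 r S F \<longleftrightarrow> real F - real r * real S \<le> real r * \<alpha> - \<beta>"
proof -
  have D: "0 < \<alpha> + \<beta> + real S + real F" using assms by simp
  define T where "T = (\<alpha> + real S) / (\<alpha> + \<beta> + real S + real F)"
  have "real r * T - real 1 * (1 - T) = ((real r + 1) * (\<alpha> + real S) - (\<alpha> + \<beta> + real S + real F)) / (\<alpha> + \<beta> + real S + real F)"
    using D frac_aux[of "\<alpha> + \<beta> + real S + real F" "real r" "\<alpha> + real S"] unfolding T_def by simp
  then have "trust_ok \<alpha> \<beta> 1 r S F \<longleftrightarrow> 0 \<le> (real r + 1) * (\<alpha> + real S) - (\<alpha> + \<beta> + real S + real F)"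
    unfolding trust_ok_def theta_hat_def T_def[symmetric] using D by (simp add: zero_le_divide_iff)
  then show ?thesis by (simp add: algebra_simps)
qed

lemma alive_iff: "snd (snd (trust_state \<alpha> \<beta> c r \<omega> t)) =
   (\<forall>n\<le>t. trust_ok \<alpha> \<beta> c r (S_hat \<alpha> \<beta> c r \<omega> n) (F_hat \<alpha> \<beta> c r \<omega> n))"
proof (induction t)
  case 0 then show ?case by (simp add: S_hat_def F_hat_def)
next
  case (Suc t)
  obtain S F al where st: "trust_state \<alpha> \<beta> c r \<omega> t = (S, F, al)" by (cases "trust_state \<alpha> \<beta> c r \<omega> t") auto
  show ?case using Suc st by (auto simp: S_hat_def F_hat_def Let_def le_Suc_eq)
qed

lemma W_eq: "(\<forall>n<t. trust_ok \<alpha> \<beta> c r (S_hat \<alpha> \<beta> c r \<omega> n) (F_hat \<alpha> \<beta> c r \<omega> n)) \<Longrightarrow>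
   int (F_hat \<alpha> \<beta> c r \<omega> t) - int r * int (S_hat \<alpha> \<beta> c r \<omega> t) = rw_Z 1 r \<omega> t"
proof (induction t)
  case 0 then show ?case by (simp add: S_hat_def F_hat_def)
next
  case (Suc t)
  obtain S F al where st: "trust_state \<alpha> \<beta> c r \<omega> t = (S, F, al)" by (cases "trust_state \<alpha> \<beta> c r \<omega> t") auto
  have al: al using alive_iff[of \<alpha> \<beta> c r \<omega> t] Suc.prems st by auto
  have IH: "int F - int r * int S = rw_Z 1 r \<omega> t" using Suc st by (simp add: S_hat_def F_hat_def)
  show ?case using IH al st by (auto simp: S_hat_def F_hat_def Let_def Z_Suc rw_step_def algebra_simps)
qed

lemma okZ: assumes "0 < a"
  shows "trust_ok (real a) (real b) 1 r S F \<longleftrightarrow> int F - int r * int S < int r * int a - int b + 1"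
proof -
  have "trust_ok (real a) (real b) 1 r S F \<longleftrightarrow> real_of_int (int F - int r * int S) \<le> real_of_int (int r * int a - int b)"
    using ok_iff[of "real a" "real b" r S F] assms by simp
  also have "\<dots> \<longleftrightarrow> int F - int r * int S \<le> int r * int a - int b" by (rule of_int_le_iff)
  finally show ?thesis by linarith
qed

lemma quit_iff: assumes "0 < a"
  shows "tau (real a) (real b) 1 r \<omega> < \<infinity> \<longleftrightarrow> (\<exists>t. int r * int a - int b + 1 \<le> rw_Z 1 r \<omega> t)"
    (is "?L \<longleftrightarrow> ?R")
proof -
  let ?ok = "\<lambda>n. trust_ok (real a) (real b) 1 r (S_hat (real a) (real b) 1 r \<omega> n) (F_hat (real a) (real b) 1 r \<omega> n)"
  have L: "?L \<longleftrightarrow> (\<exists>t. \<not> ?ok t)" unfolding tau_def by simp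
  show ?thesis unfolding L
  proof
    assume "\<exists>t. \<not> ?ok t"
    then obtain t where t: "\<not> ?ok t" "\<forall>n<t. ?ok n" using exists_least_iff[of "\<lambda>t. \<not> ?ok t"] by auto
    show ?R using W_eq[OF t(2)] t(1) okZ[OF assms] by (intro exI[of _ t]) auto
  next
    assume R: ?R
    show "\<exists>t. \<not> ?ok t"
    proof (rule ccontr)
      assume "\<not> (\<exists>t. \<not> ?ok t)"
      then have all: "\<forall>t. ?ok t" by blast
      obtain t where "int r * int a - int b + 1 \<le> rw_Z 1 r \<omega> t" using R by blast
      then show False using W_eq[of t] all okZ[OF assms] by (metis not_le)
    qed
  qed
qed

theorem lemma3p3:
  fixes r :: nat and \<theta> :: real
  assumes "0 < r" and "1 / (1 + real r) < \<theta>" and "\<theta> < 1"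
  shows "(\<forall>u::nat. rw_hit_prob (int u) 1 r \<theta> = rw_hit_prob 1 1 r \<theta> ^ u)
       \<and> (let \<rho> = rw_hit_prob 1 1 r \<theta> in
            0 \<le> \<rho> \<and> \<rho> < 1 \<and> \<rho> = (1 - \<theta>) + \<theta> * \<rho> ^ (r + 1)
            \<and> (\<forall>x::real. 0 \<le> x \<and> x < 1 \<and> x = (1 - \<theta>) + \<theta> * x ^ (r + 1) \<longrightarrow> x = \<rho>))
       \<and> (\<forall>\<alpha> \<beta> :: nat. 0 < \<alpha> \<longrightarrow> 0 < \<beta> \<longrightarrow>
            p_quit (real \<alpha>) (real \<beta>) 1 r \<theta>
              = rw_hit_prob (int r * int \<alpha> - int \<beta> + 1) 1 r \<theta>)"
proof -
  have th: "0 < \<theta>" using assms(2) by (smt (verit) divide_pos_pos of_nat_0_le_iff)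
  then have th0: "0 \<le> \<theta>" "\<theta> \<le> 1" using assms(3) by auto
  obtain q where q: "0 \<le> q" "q < 1" "q = (1 - \<theta>) + \<theta> * q ^ (r + 1)"
    using root_exists[OF assms] by blast
  define \<rho> where "\<rho> = rw_hit_prob 1 1 r \<theta>"
  have pow: "rw_hit_prob (int u) 1 r \<theta> = \<rho> ^ u" for u :: nat
  proof (induction u)
    case 0 then show ?case by (simp add: hit_le0)
  next
    case (Suc u)
    have "rw_hit_prob (int (Suc u)) 1 r \<theta> = rw_hit_prob (int u + 1) 1 r \<theta>" by (simp add: add.commute)
    also have "\<dots> = \<rho> * rw_hit_prob (int u) 1 r \<theta>" unfolding \<rho>_def using th0 by (intro hit_mult) auto
    finally show ?case using Suc by simp
  qed
  have r0: "0 \<le> \<rho>" unfolding \<rho>_def rw_hit_prob_def by simp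
  have req: "\<rho> = (1 - \<theta>) + \<theta> * \<rho> ^ (r + 1)"
  proof -
    have "rw_hit_prob (1 + int r) 1 r \<theta> = rw_hit_prob (int (r + 1)) 1 r \<theta>" by (simp add: add.commute)
    then show ?thesis using rho_eq[OF th0, of r] pow[of "r + 1"] unfolding \<rho>_def by simp
  qed
  have "\<rho> \<le> q" using hit_bound[OF th0 q(1) q(3), of 1] unfolding \<rho>_def by simp
  then have r1: "\<rho> < 1" using q(2) by simp
  have uniq: "\<forall>x::real. 0 \<le> x \<and> x < 1 \<and> x = (1 - \<theta>) + \<theta> * x ^ (r + 1) \<longrightarrow> x = \<rho>"
    using root_unique[OF assms(1) _ _ _ r0 r1 req th] by blast
  have quit: "p_quit (real a) (real b) 1 r \<theta> = rw_hit_prob (int r * int a - int b + 1) 1 r \<theta>"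
    if "0 < a" for a b :: nat
    unfolding p_quit_def rw_hit_prob_def using quit_iff[OF that] by simp
  show ?thesis using pow r0 r1 req uniq quit unfolding \<rho>_def Let_def by blast
qed
end
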